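(* Let $X_n(\underline{d})=X_n(d_1,\dots,d_r)\subset\mathbb{C}P^{n+r}$ be a complete intersection with canonical bundle $K$, set $c_1=n+r+1-\sum_{i=1}^rd_i$, and let $k,N$ be integers with $N>0$. Then $$\chi\left(X_n(\underline{d}),K^{\frac{k}{N}}\right)=\sum_{j=0}^r(-1)^{n+r+j}\sum_{1\leqslant k_1<\dots<k_j\leqslant r}\binom{\frac{k}{N}c_1-1+d_{k_1}+\cdots+d_{k_j}}{n+r},$$ where the sum $d_{k_1}+\dots+d_{k_j}$ is $0$ for $j=0$. Moreover, if $c_1\equiv 0\pmod N$, then $\chi(X_n(\underline{d}),K^{k/N})$ is an integer.
   Context: A complete intersection $X_n(d_1,\dots,d_r)\subset\mathbb{C}P^{n+r}$ is a compact complex $n$-dimensional manifold given as the transversal intersection of $r$ nonsingular hypersurfaces of degrees $d_1,\dots,d_r$; its canonical bundle is $\gamma^{-c_1}$ where $\gamma$ is the pullback of the hyperplane bundle. For a rational number $s$, $\chi(M,K^s)=\big(e^{-s\,c_1(M)}{\rm td}(TM)\big)[M]$ is the genus with characteristic power series $e^{-sx}\frac{x}{1-e^{-x}}$. Generalized binomial coefficients: $\binom{a}{m}=\frac{a(a-1)\cdots(a-m+1)}{m!}$ for rational $a$. *)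

theory Defs
  imports "HOL-Computational_Algebra.Formal_Power_Series"
begin

definition one_minus_exp_div_X :: "rat \<Rightarrow> rat fps" where
  "one_minus_exp_div_X c = fps_shift 1 (1 - fps_exp (- c))"

definition todd_fps :: "rat fps" where
  "todd_fps = inverse (one_minus_exp_div_X 1)"

text \<open>First Chern number c_1 of X_n(d_1,...,d_r) in units of the hyperplane class x:
  c_1 = n + r + 1 - (d_1 + ... + d_r).\<close>
definition ci_c1 :: "nat \<Rightarrow> nat list \<Rightarrow> int" where
  "ci_c1 n ds = int n + int (length ds) + 1 - (\<Sum>d\<leftarrow>ds. int d)"

text \<open>chi(X_n(d), K^s) = (e^(-s c_1(M)) td(TM))[M].  The cohomology of the complete
  intersection is evaluated via x = c_1(gamma), x^n[M] = d_1...d_r, c_1(M) = c_1 x and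
  TM (+) (gamma^d_1 (+) ... (+) gamma^d_r) = (n+r+1) gamma, so that
  td(TM) = (x/(1-e^(-x)))^(n+r+1) * prod_i (1-e^(-d_i x))/(d_i x).\<close>
definition ci_chi :: "nat \<Rightarrow> nat list \<Rightarrow> rat \<Rightarrow> rat" where
  "ci_chi n ds s =
     (\<Prod>d\<leftarrow>ds. of_nat d) *
     fps_nth (fps_exp (- s * of_int (ci_c1 n ds)) * todd_fps ^ (n + length ds + 1) *
              (\<Prod>d\<leftarrow>ds. fps_const (inverse (of_nat d)) * one_minus_exp_div_X (of_nat d))) n"

end

theory Submission
  imports Defs
begin

unbundle fps_syntax

abbreviation "EE \<equiv> one_minus_exp_div_X 1"
abbreviation "TT \<equiv> todd_fps"

lemma X_omed: "fps_X * one_minus_exp_div_X c = 1 - fps_exp (- c)"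
proof -
  have "subdegree (1 - fps_exp (- c)) \<ge> 1 \<or> 1 - fps_exp (- c) = 0"
    by (metis One_nat_def Suc_leI add_cancel_right_right fps_exp_nth fps_one_nth fps_sub_nth
        diff_self fact_0 nonzero_mult_div_cancel_left nth_subdegree_nonzero not_gr_zero
        of_nat_1 power_0 div_by_1 zero_neq_one)
  then show ?thesis unfolding one_minus_exp_div_X_def
    by (metis fps_shift_times_fps_X mult.commute fps_shift_zero mult_zero_right)
qed

lemma EE0: "EE $ 0 = 1"
  unfolding one_minus_exp_div_X_def by simp

lemma TT0: "TT $ 0 = 1"
  unfolding todd_fps_def by (simp add: EE0)

lemma TE: "TT * EE = 1"
  unfolding todd_fps_def using EE0 by (intro inverse_mult_eq_1) simp

lemma XTd: "fps_X * fps_deriv TT = TT - TT^2 * fps_exp (-1)"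
proof -
  have h1: "EE + fps_X * fps_deriv EE = fps_exp (-1)"
  proof -
    have "fps_deriv (fps_X * EE) = fps_deriv (1 - fps_exp (-1))" using X_omed[of 1] by simp
    then show ?thesis by (simp add: fps_const_neg[symmetric] add.commute)
  qed
  have h2: "fps_deriv TT * EE + TT * fps_deriv EE = 0"
    using arg_cong[OF TE, of fps_deriv] by (simp add: algebra_simps)
  have "fps_X * fps_deriv TT = fps_X * fps_deriv TT * (TT * EE)" using TE by simp
  also have "\<dots> = TT * (fps_X * (fps_deriv TT * EE))" by (simp add: algebra_simps)
  also have "\<dots> = TT * (fps_X * (- (TT * fps_deriv EE)))"
  proof -
    have "fps_deriv TT * EE = - (TT * fps_deriv EE)" using h2 by (simp add: eq_neg_iff_add_eq_0)
    then show ?thesis by simp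
  qed
  also have "\<dots> = - TT * TT * (fps_X * fps_deriv EE)"
    by (simp add: algebra_simps)
  also have "\<dots> = - TT * TT * (fps_exp (-1) - EE)"
  proof -
    have "fps_X * fps_deriv EE = fps_exp (-1) - EE" using h1 by (metis add_diff_cancel_left')
    then show ?thesis by (simp only:)
  qed
  also have "\<dots> = TT - TT^2 * fps_exp (-1)" using TE by (simp add: algebra_simps power2_eq_square)
  finally show ?thesis .
qed

definition ff :: "nat \<Rightarrow> rat \<Rightarrow> rat" where
  "ff m a = (fps_exp (-a) * TT ^ (Suc m)) $ m"

lemma recA: "ff (Suc m) a = ff (Suc m) (a+1) + ff m a"
proof -
  have "fps_exp (-a) * TT^(Suc (Suc m)) - fps_exp (-(a+1)) * TT^(Suc (Suc m))
      = fps_exp (-a) * (1 - fps_exp (-1)) * TT^(Suc (Suc m))"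
    by (simp add: algebra_simps fps_exp_add_mult[symmetric])
  also have "\<dots> = fps_exp (-a) * (fps_X * EE) * TT^(Suc (Suc m))"
    using X_omed[of 1] by simp
  also have "\<dots> = fps_X * (fps_exp (-a) * TT^(Suc m)) * (TT * EE)"
    by (simp add: algebra_simps)
  also have "\<dots> = fps_X * (fps_exp (-a) * TT^(Suc m))" using TE by simp
  finally have "(fps_exp (-a) * TT^(Suc (Suc m)) - fps_exp (-(a+1)) * TT^(Suc (Suc m))) $ Suc m
     = (fps_X * (fps_exp (-a) * TT^(Suc m))) $ Suc m" by simp
  then show ?thesis unfolding ff_def by simp
qed

lemma recB: "a * ff m a + of_nat (Suc m) * ff (Suc m) (a+1) = 0"
proof -
  define g where "g = fps_exp (-a) * TT ^ (Suc m)"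
  have "fps_X * fps_deriv g = - (fps_const a * fps_X * g) + fps_const (of_nat (Suc m)) * g
      - fps_const (of_nat (Suc m)) * (fps_exp (-(a+1)) * TT^(Suc (Suc m)))"
  proof -
    have "fps_X * fps_deriv g = - fps_const a * fps_X * g
        + fps_const (of_nat (Suc m)) * fps_exp (-a) * TT^m * (fps_X * fps_deriv TT)"
    proof -
      have "fps_deriv (TT^Suc m) = fps_const (of_nat (Suc m)) * fps_deriv TT * TT^m"
        by (simp only: fps_deriv_power diff_Suc_1)
      then show ?thesis unfolding g_def fps_deriv_mult by (simp add: algebra_simps fps_const_neg)
    qed
    also have "\<dots> = - fps_const a * fps_X * g
        + fps_const (of_nat (Suc m)) * fps_exp (-a) * TT^m * (TT - TT^2 * fps_exp (-1))"
      by (simp add: XTd)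
    also have "\<dots> = - fps_const a * fps_X * g + fps_const (of_nat (Suc m)) * g
      - fps_const (of_nat (Suc m)) * (fps_exp (-a) * fps_exp (-1) * TT^(Suc (Suc m)))"
      unfolding g_def by (simp add: algebra_simps power2_eq_square)
    finally show ?thesis by (simp add: fps_exp_add_mult[symmetric] add.commute)
       (simp add: fps_const_neg[symmetric] del: fps_const_neg)
  qed
  then have "(fps_X * fps_deriv g) $ Suc m = (- (fps_const a * fps_X * g) + fps_const (of_nat (Suc m)) * g
      - fps_const (of_nat (Suc m)) * (fps_exp (-(a+1)) * TT^(Suc (Suc m)))) $ Suc m" by simp
  also have "\<dots> = - (a * g $ m) + of_nat (Suc m) * g $ Suc m
      - of_nat (Suc m) * ff (Suc m) (a+1)"
    unfolding ff_def fps_sub_nth fps_add_nth fps_neg_nth fps_mult_left_const_nth mult.assoc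
    by simp
  finally show ?thesis unfolding ff_def g_def[symmetric] by simp
qed

lemma gb_step: "(b::rat) gchoose (Suc m) = (b gchoose m) * (b - of_nat m) / of_nat (Suc m)"
proof -
  have "of_nat (Suc m) * (b gchoose Suc m) = (b - of_nat m) * (b gchoose m)"
    using gbinomial_absorption[of m b] gbinomial_absorb_comp[of b m] by simp
  then show ?thesis by (simp add: field_simps del: of_nat_Suc)
qed

lemma ff_closed: "ff m a = (-1)^m * ((a - 1) gchoose m)"
proof (induction m arbitrary: a)
  case 0
  then show ?case by (simp add: ff_def TT0)
next
  case (Suc m)
  have "ff (Suc m) a = ff (Suc m) (a+1) + ff m a" by (rule recA)
  also have "ff (Suc m) (a+1) = - a / of_nat (Suc m) * ff m a"
    using recB[of a m] by (simp add: field_simps del: of_nat_Suc)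
  finally have "ff (Suc m) a = (of_nat (Suc m) - a) / of_nat (Suc m) * ff m a"
    by (simp add: field_simps del: of_nat_Suc)
  then show ?case using Suc.IH[of a] by (simp add: gb_step field_simps del: of_nat_Suc) (simp add: algebra_simps)
qed

lemma prodE: "\<forall>d\<in>set ds. d \<ge> (1::nat) \<Longrightarrow>
  fps_const (\<Prod>d\<leftarrow>ds. of_nat d) * fps_X^(length ds) *
    (\<Prod>d\<leftarrow>ds. fps_const (inverse (of_nat d)) * one_minus_exp_div_X (of_nat d))
  = (\<Prod>d\<leftarrow>ds. 1 - fps_exp (- of_nat d))"
proof (induction ds)
  case Nil
  then show ?case by simp
next
  case (Cons d ds)
  define A where "A = fps_const (inverse (of_nat d)) * one_minus_exp_div_X (of_nat d :: rat)"
  define Q where "Q = (\<Prod>d\<leftarrow>ds. fps_const (inverse (of_nat d)) * one_minus_exp_div_X (of_nat d :: rat))"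
  define p where "p = (\<Prod>d\<leftarrow>ds. of_nat d :: rat)"
  have d0: "(of_nat d :: rat) \<noteq> 0" using Cons.prems by simp
  have c1: "fps_const (of_nat d) * fps_const (inverse (of_nat d)) = (1 :: rat fps)"
    using d0 by (simp add: fps_const_mult)
  have "fps_const (of_nat d) * fps_X * A = (fps_const (of_nat d) * fps_const (inverse (of_nat d))) * (fps_X * one_minus_exp_div_X (of_nat d))"
    unfolding A_def by (simp only: mult_ac)
  also have "\<dots> = 1 - fps_exp (- of_nat d :: rat)"
    using X_omed[of "of_nat d"] c1 by simp
  finally have e1: "fps_const (of_nat d) * fps_X * A = 1 - fps_exp (- of_nat d :: rat)" .
  have IH: "fps_const p * fps_X^(length ds) * Q = (\<Prod>d\<leftarrow>ds. 1 - fps_exp (- of_nat d))"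
    using Cons unfolding p_def Q_def by simp
  have "fps_const (\<Prod>d\<leftarrow>d#ds. of_nat d) * fps_X^(length (d#ds)) *
    (\<Prod>d\<leftarrow>d#ds. fps_const (inverse (of_nat d)) * one_minus_exp_div_X (of_nat d))
    = fps_const (of_nat d * p) * fps_X^(Suc (length ds)) * (A * Q)"
    unfolding A_def Q_def p_def by simp
  also have "\<dots> = (fps_const (of_nat d) * fps_X * A) * (fps_const p * fps_X^(length ds) * Q)"
    by (simp only: fps_const_mult[symmetric] power_Suc mult_ac)
  also have "\<dots> = (\<Prod>d\<leftarrow>d#ds. 1 - fps_exp (- of_nat d))"
    using e1 IH by simp
  finally show ?case .
qed

lemma prod_exp: "finite S \<Longrightarrow> (\<Prod>i\<in>S. fps_exp (- f i)) = fps_exp (- (\<Sum>i\<in>S. f i) :: rat)"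
  by (induction S rule: finite_induct) (simp_all add: fps_exp_add_mult[symmetric] add.commute)

lemma list_prod_conv: "(\<Prod>d\<leftarrow>ds. f d) = (\<Prod>i<length ds. f (ds ! i))"
proof -
  have "(\<Prod>d\<leftarrow>ds. f d) = (\<Prod>i\<in>{0..<length ds}. map f ds ! i)"
    by (simp only: prod.list_conv_set_nth length_map)
  also have "\<dots> = (\<Prod>i<length ds. f (ds ! i))"
    unfolding lessThan_atLeast0 by (rule prod.cong) auto
  finally show ?thesis .
qed
lemma neg1_pow: "((-1) ^ k * f :: rat fps) $ n = (-1)^k * f $ n"
proof -
  have a: "(-1::rat fps) = fps_const (-1)" by (metis fps_const_neg fps_const_1_eq_1)
  have "(-1::rat fps) ^ k = fps_const ((-1)^k)" by (subst a, rule fps_const_power)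
  then show ?thesis by simp
qed

lemma group_card: "finite A \<Longrightarrow> (\<Sum>S\<in>Pow A. g S) = (\<Sum>j=0..card A. \<Sum>S | S \<subseteq> A \<and> card S = j. g S)"
proof -
  assume fA: "finite A"
  have "Pow A = (\<Union>j\<in>{0..card A}. {S. S \<subseteq> A \<and> card S = j})"
  proof
    show "Pow A \<subseteq> (\<Union>j\<in>{0..card A}. {S. S \<subseteq> A \<and> card S = j})"
    proof
      fix S assume "S \<in> Pow A"
      then have "S \<subseteq> A" "card S \<le> card A" using fA card_mono by auto
      then show "S \<in> (\<Union>j\<in>{0..card A}. {S. S \<subseteq> A \<and> card S = j})" by auto
    qed
  qed auto
  then have "(\<Sum>S\<in>Pow A. g S) = sum g (\<Union>j\<in>{0..card A}. {S. S \<subseteq> A \<and> card S = j})" by simp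
  also have "\<dots> = (\<Sum>j=0..card A. sum g {S. S \<subseteq> A \<and> card S = j})"
  proof (rule sum.UNION_disjoint)
    show "finite {0..card A}" by simp
    show "\<forall>i\<in>{0..card A}. finite {S. S \<subseteq> A \<and> card S = i}"
    proof
      fix i
      have "{S. S \<subseteq> A \<and> card S = i} \<subseteq> Pow A" by auto
      then show "finite {S. S \<subseteq> A \<and> card S = i}" using fA finite_subset by blast
    qed
    show "\<forall>i\<in>{0..card A}. \<forall>j\<in>{0..card A}. i \<noteq> j \<longrightarrow>
      {S. S \<subseteq> A \<and> card S = i} \<inter> {S. S \<subseteq> A \<and> card S = j} = {}" by blast
  qed
  finally show ?thesis by simp
qed
lemma int_gchoose: "(x::rat) \<in> \<int> \<Longrightarrow> x gchoose m \<in> \<int>"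
proof -
  assume "x \<in> \<int>"
  then obtain i where xi: "x = of_int i" by (auto elim: Ints_cases)
  show ?thesis
  proof (cases "i \<ge> 0")
    case True
    then have "x = of_nat (nat i)" using xi by simp
    then have "x gchoose m = of_nat (nat i choose m)" by (simp only: binomial_gbinomial)
    then show ?thesis by simp
  next
    case False
    then have e: "of_nat m - x - 1 = of_nat (m + nat (- i) - 1)" using xi by (simp add: of_nat_diff)
    have "x gchoose m = (-1)^m * ((of_nat m - x - 1) gchoose m)" by (rule gbinomial_negated_upper)
    also have "\<dots> = (-1)^m * of_nat ((m + nat (- i) - 1) choose m)"
      by (simp only: e binomial_gbinomial)
    finally show ?thesis by simp
  qed
qed



theorem theorem4p3:
  fixes n :: nat and ds :: "nat list" and k N :: int
  assumes "\<forall>d \<in> set ds. d \<ge> 1"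
    and "N > 0"
  shows "(ci_chi n ds (of_int k / of_int N) =
           (\<Sum>j = 0..length ds. (-1) ^ (n + length ds + j) *
              (\<Sum>S | S \<subseteq> {..<length ds} \<and> card S = j.
                 ((of_int k / of_int N) * of_int (ci_c1 n ds) - 1 + (\<Sum>i\<in>S. of_nat (ds ! i)))
                   gchoose (n + length ds)))) \<and>
         (ci_c1 n ds mod N = 0 \<longrightarrow> ci_chi n ds (of_int k / of_int N) \<in> \<int>)"
proof -
  define s :: rat where "s = of_int k / of_int N"
  define c where "c = ci_c1 n ds"
  define r where "r = length ds"
  define m where "m = n + r"
  define A where "A = {..<r}"
  define P where "P = (\<Prod>d\<leftarrow>ds. fps_const (inverse (of_nat d)) * one_minus_exp_div_X (of_nat d :: rat))"
  define p where "p = (\<Prod>d\<leftarrow>ds. of_nat d :: rat)"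
  define H where "H = fps_exp (- s * of_int c) * TT ^ Suc m"
  define dS where "dS = (\<lambda>S. \<Sum>i\<in>S. of_nat (ds ! i) :: rat)"
  have fA: "finite A" and cA: "card A = r" unfolding A_def by simp_all
  have step1: "ci_chi n ds s = (H * (\<Prod>d\<leftarrow>ds. 1 - fps_exp (- of_nat d))) $ m"
  proof -
    have "ci_chi n ds s = p * (H * P) $ n"
      unfolding ci_chi_def H_def P_def p_def c_def m_def r_def by (simp add: mult.assoc)
    also have "\<dots> = (fps_X ^ r * (fps_const p * (H * P))) $ m"
      by (simp add: fps_X_power_mult_nth m_def)
    also have "fps_X ^ r * (fps_const p * (H * P)) = H * (fps_const p * fps_X ^ r * P)"
      by (simp only: mult_ac)
    also have "fps_const p * fps_X ^ r * P = (\<Prod>d\<leftarrow>ds. 1 - fps_exp (- of_nat d))"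
      unfolding p_def r_def P_def by (rule prodE[OF assms(1)])
    finally show ?thesis .
  qed
  have step2: "(\<Prod>d\<leftarrow>ds. 1 - fps_exp (- of_nat d)) =
      (\<Sum>S\<in>Pow A. (-1) ^ card S * fps_exp (- dS S))"
  proof -
    have "(\<Prod>d\<leftarrow>ds. 1 - fps_exp (- of_nat d)) = (\<Prod>i\<in>A. 1 - fps_exp (- of_nat (ds ! i) :: rat))"
      unfolding A_def r_def by (rule list_prod_conv)
    also have "\<dots> = (\<Sum>S\<in>Pow A. (-1) ^ card S * (\<Prod>i\<in>S. fps_exp (- of_nat (ds ! i))) * (\<Prod>i\<in>A-S. 1))"
      by (rule prod_diff_conv_sum[OF fA])
    also have "\<dots> = (\<Sum>S\<in>Pow A. (-1) ^ card S * fps_exp (- dS S))"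
    proof (rule sum.cong)
      fix S assume "S \<in> Pow A"
      then have "finite S" using fA finite_subset by auto
      then show "(-1) ^ card S * (\<Prod>i\<in>S. fps_exp (- of_nat (ds ! i))) * (\<Prod>i\<in>A-S. 1)
          = (-1) ^ card S * fps_exp (- dS S)"
        unfolding dS_def by (simp add: prod_exp)
    qed simp
    finally show ?thesis .
  qed
  have step3: "(H * (\<Sum>S\<in>Pow A. (-1) ^ card S * fps_exp (- dS S))) $ m =
      (\<Sum>S\<in>Pow A. (-1) ^ card S * ((-1) ^ m * ((s * of_int c - 1 + dS S) gchoose m)))"
  proof -
    have "(H * (\<Sum>S\<in>Pow A. (-1) ^ card S * fps_exp (- dS S))) $ m
        = (\<Sum>S\<in>Pow A. ((-1) ^ card S * (H * fps_exp (- dS S))) $ m)"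
      by (simp add: sum_distrib_left fps_sum_nth mult_ac)
    also have "\<dots> = (\<Sum>S\<in>Pow A. (-1) ^ card S * ff m (s * of_int c + dS S))"
    proof (rule sum.cong)
      fix S
      have "H * fps_exp (- dS S) = fps_exp (- (s * of_int c + dS S)) * TT ^ Suc m"
        unfolding H_def by (simp add: fps_exp_add_mult[symmetric] mult_ac)
      then show "((-1) ^ card S * (H * fps_exp (- dS S))) $ m = (-1) ^ card S * ff m (s * of_int c + dS S)"
        unfolding ff_def by (simp only: neg1_pow)
    qed simp
    also have "\<dots> = (\<Sum>S\<in>Pow A. (-1) ^ card S * ((-1) ^ m * ((s * of_int c - 1 + dS S) gchoose m)))"
      by (simp add: ff_closed algebra_simps)
    finally show ?thesis .
  qed
  have eq: "ci_chi n ds s = (\<Sum>j = 0..r. (-1) ^ (m + j) *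
              (\<Sum>S | S \<subseteq> A \<and> card S = j. (s * of_int c - 1 + dS S) gchoose m))"
  proof -
    have "ci_chi n ds s = (\<Sum>S\<in>Pow A. (-1) ^ card S * ((-1) ^ m * ((s * of_int c - 1 + dS S) gchoose m)))"
      using step1 step2 step3 by simp
    also have "\<dots> = (\<Sum>j = 0..r. \<Sum>S | S \<subseteq> A \<and> card S = j.
        (-1) ^ card S * ((-1) ^ m * ((s * of_int c - 1 + dS S) gchoose m)))"
      using group_card[OF fA, of "\<lambda>S. (-1) ^ card S * ((-1) ^ m * ((s * of_int c - 1 + dS S) gchoose m))"]
      unfolding cA .
    also have "\<dots> = (\<Sum>j = 0..r. (-1) ^ (m + j) *
              (\<Sum>S | S \<subseteq> A \<and> card S = j. (s * of_int c - 1 + dS S) gchoose m))"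
    proof (rule sum.cong[OF refl])
      fix j
      have "(\<Sum>S | S \<subseteq> A \<and> card S = j.
        (-1) ^ card S * ((-1) ^ m * ((s * of_int c - 1 + dS S) gchoose m)))
        = (\<Sum>S | S \<subseteq> A \<and> card S = j. (-1) ^ (m + j) * ((s * of_int c - 1 + dS S) gchoose m))"
      proof (rule sum.cong[OF refl])
        fix S assume "S \<in> {S. S \<subseteq> A \<and> card S = j}"
        then have "card S = j" by simp
        then show "(-1) ^ card S * ((-1) ^ m * ((s * of_int c - 1 + dS S) gchoose m))
           = (-1) ^ (m + j) * ((s * of_int c - 1 + dS S) gchoose m)"
          by (simp only: power_add mult_ac)
      qed
      then show "(\<Sum>S | S \<subseteq> A \<and> card S = j.
        (-1) ^ card S * ((-1) ^ m * ((s * of_int c - 1 + dS S) gchoose m))) = (-1) ^ (m + j) *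
              (\<Sum>S | S \<subseteq> A \<and> card S = j. (s * of_int c - 1 + dS S) gchoose m)"
        by (simp only: sum_distrib_left)
    qed
    finally show ?thesis .
  qed
  have int: "ci_chi n ds s \<in> \<int>" if "c mod N = 0"
  proof -
    have "N dvd c" using that by (simp add: dvd_eq_mod_eq_0)
    then obtain q where q: "c = N * q" by (rule dvdE)
    have nz: "(of_int N :: rat) \<noteq> 0" using assms(2) by simp
    have "s * of_int c = (of_int k / of_int N) * (of_int N * of_int q)"
      unfolding s_def q by (simp only: of_int_mult)
    also have "\<dots> = of_int k * of_int q" using nz by simp
    finally have sc: "s * of_int c = of_int (k * q)" by simp
    have t: "(s * of_int c - 1 + dS S) gchoose m \<in> \<int>" for S
    proof (rule int_gchoose)
      have "dS S \<in> \<int>" unfolding dS_def by (intro Ints_sum Ints_of_nat)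
      then show "s * of_int c - 1 + dS S \<in> \<int>" unfolding sc by (intro Ints_add Ints_diff Ints_of_int Ints_1)
    qed
    have "(\<Sum>j = 0..r. (-1) ^ (m + j) *
              (\<Sum>S | S \<subseteq> A \<and> card S = j. (s * of_int c - 1 + dS S) gchoose m)) \<in> \<int>"
      by (intro Ints_sum Ints_mult Ints_power Ints_minus Ints_1 t)
    then show ?thesis by (simp only: eq)
  qed
  note eq' = eq[unfolded dS_def]
  show ?thesis
    unfolding s_def[symmetric] c_def[symmetric] r_def[symmetric] m_def[symmetric] A_def[symmetric]
    using eq' int by blast
qed

end
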